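(* Let $(M,\omega,\mathbb{T}^n,\mu)$ be a compact toric symplectic manifold of dimension $2n$ with moment polytope $P$, let $\tau$ be the symplectic potential on $\mathring{P}$ of a compatible toric K\"ahler structure, let $\phi_s=(\partial^2\tau/\partial\mu_i\partial\mu_j)$ be its Hessian, and let $F$ be a constant real antisymmetric $n\times n$ matrix such that $\mathrm{I}+\frac14[(\phi_s)^{-1/2}F(\phi_s)^{-1/2}]^2$ is positive definite. Put $\Xi=\phi_s+\frac14F(\phi_s)^{-1}F$. Then on $\mathring{P}$ \[-\sum_{i,j}\frac{\partial^2(\Xi^{-1})_{ij}}{\partial\mu_i\partial\mu_j}=\sum_{i,j}\frac{\partial}{\partial\mu_i}\Big[\Big(\frac{\partial}{\partial\mu_j}\log\det(\phi_s\Xi)^{1/2}\Big)(\Xi^{-1})_{ij}\Big].\] In words: for toric generalized K\"ahler manifolds of symplectic type, Boulanger's scalar curvature (the left side) equals Goto's scalar curvature (the right side).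
   Context: $\mathring{P}$ is the interior of the moment polytope $P=\mu(M)$; $\mu=(\mu_1,\dots,\mu_n)$ is the moment map; $\tau$ is a smooth strictly convex function on $\mathring P$ (Guillemin's symplectic potential of a $\mathbb{T}$-invariant K\"ahler structure compatible with $\omega$). $\mathrm{I}$ is the identity matrix. The matrix $F$ together with $\tau$ (and an arbitrary constant antisymmetric matrix $C$) parametrizes a toric generalized K\"ahler structure of symplectic type on $M$. In this setting the left side is the scalar curvature obtained from Boulanger's moment map formalism, and the right side is the scalar curvature obtained from Goto's generalized Ricci form. *)

theory Defs
  imports "HOL-Analysis.Analysis"
begin

definition pd :: "'n::finite \<Rightarrow> (real^'n \<Rightarrow> real) \<Rightarrow> real^'n \<Rightarrow> real" where
  "pd i f = (\<lambda>x. frechet_derivative f (at x) (axis i 1))"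

fun iter_pd :: "'n::finite list \<Rightarrow> (real^'n \<Rightarrow> real) \<Rightarrow> real^'n \<Rightarrow> real" where
  "iter_pd [] f = f"
| "iter_pd (i # is) f = pd i (iter_pd is f)"

definition smooth_on :: "(real^'n::finite \<Rightarrow> real) \<Rightarrow> (real^'n) set \<Rightarrow> bool" where
  "smooth_on f U \<longleftrightarrow> (\<forall>is. iter_pd is f differentiable_on U)"

definition strictly_convex_on :: "'a::real_vector set \<Rightarrow> ('a \<Rightarrow> real) \<Rightarrow> bool" where
  "strictly_convex_on S f \<longleftrightarrow> convex S \<and>
     (\<forall>x\<in>S. \<forall>y\<in>S. \<forall>t::real. x \<noteq> y \<and> 0 < t \<and> t < 1 \<longrightarrow>
        f ((1 - t) *\<^sub>R x + t *\<^sub>R y) < (1 - t) * f x + t * f y)"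

definition hessian :: "(real^'n::finite \<Rightarrow> real) \<Rightarrow> real^'n \<Rightarrow> real^'n^'n" where
  "hessian f x = (\<chi> i j. pd i (pd j f) x)"

definition pos_def :: "real^'n::finite^'n \<Rightarrow> bool" where
  "pos_def A \<longleftrightarrow> transpose A = A \<and> (\<forall>v. v \<noteq> 0 \<longrightarrow> v \<bullet> (A *v v) > 0)"

definition msqrt :: "real^'n::finite^'n \<Rightarrow> real^'n^'n" where
  "msqrt A = (THE B. pos_def B \<and> B ** B = A)"

definition Xi :: "real^'n::finite^'n \<Rightarrow> real^'n^'n \<Rightarrow> real^'n^'n" where
  "Xi phi F = phi + (1/4::real) *\<^sub>R (F ** matrix_inv phi ** F)"

end

theory Submission
  imports Defs
begin

lemma inv_props:
  fixes A :: "real^'n::finite^'n"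
  assumes "invertible A"
  shows "A ** matrix_inv A = mat 1" "matrix_inv A ** A = mat 1"
proof -
  have "\<exists>A'. A ** A' = mat 1 \<and> A' ** A = mat 1" using assms unfolding invertible_def by blast
  from someI_ex[OF this] show "A ** matrix_inv A = mat 1" "matrix_inv A ** A = mat 1"
    unfolding matrix_inv_def by auto
qed

lemma inv_unique:
  fixes A B :: "real^'n::finite^'n"
  assumes "A ** B = mat 1"
  shows "matrix_inv A = B" "invertible A"
proof -
  show iA: "invertible A" using assms invertible_right_inverse by blast
  have "matrix_inv A = matrix_inv A ** (A ** B)" using assms by simp
  also have "\<dots> = B" by (simp add: matrix_mul_assoc inv_props[OF iA])
  finally show "matrix_inv A = B" .
qed

lemma inv_mult:
  fixes A B :: "real^'n::finite^'n"
  assumes "invertible A" "invertible B"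
  shows "matrix_inv (A ** B) = matrix_inv B ** matrix_inv A"
proof (rule inv_unique(1))
  have "A ** B ** (matrix_inv B ** matrix_inv A) = A ** (B ** matrix_inv B) ** matrix_inv A"
    by (simp add: matrix_mul_assoc)
  then show "A ** B ** (matrix_inv B ** matrix_inv A) = mat 1"
    by (simp add: inv_props assms)
qed

lemma inv_transpose:
  fixes A :: "real^'n::finite^'n"
  assumes "invertible A"
  shows "matrix_inv (transpose A) = transpose (matrix_inv A)"
  by (rule inv_unique(1)) (simp add: matrix_transpose_mul[symmetric] inv_props assms transpose_mat)

lemma inv_invertible:
  fixes A :: "real^'n::finite^'n"
  assumes "invertible A"
  shows "invertible (matrix_inv A)"
  using inv_props[OF assms] invertible_def by blast

lemma inv_sym:
  fixes A :: "real^'n::finite^'n"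
  assumes "invertible A" "transpose A = A"
  shows "transpose (matrix_inv A) = matrix_inv A"
  using inv_transpose[OF assms(1)] assms(2) by simp

lemma sym_dot:
  fixes A :: "real^'n::finite^'n"
  assumes "transpose A = A"
  shows "u \<bullet> (A *v v) = (A *v u) \<bullet> v"
proof -
  have "u \<bullet> (A *v v) = (u v* A) \<bullet> v" by (simp add: dot_lmul_matrix)
  also have "\<dots> = (transpose A *v u) \<bullet> v" by simp
  finally show ?thesis using assms by simp
qed

lemma pos_def_invertible:
  fixes A :: "real^'n::finite^'n"
  assumes "pos_def A"
  shows "invertible A"
proof -
  have "\<forall>x. A *v x = 0 \<longrightarrow> x = 0"
    using assms unfolding pos_def_def by (metis inner_zero_right less_irrefl)
  then show ?thesis using matrix_left_invertible_ker invertible_left_inverse by blast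
qed

lemma max_eig:
  fixes A :: "real^'n::finite^'n" and V :: "(real^'n) set"
  assumes sym: "transpose A = A" and sV: "subspace V" and nz: "V \<noteq> {0}"
    and inv: "\<forall>v\<in>V. A *v v \<in> V"
  shows "\<exists>u\<in>V. norm u = 1 \<and> A *v u = (u \<bullet> (A *v u)) *\<^sub>R u"
proof -
  define q where "q v = v \<bullet> (A *v v)" for v
  define K where "K = V \<inter> sphere 0 1"
  have cK: "compact K" unfolding K_def
    by (intro closed_Int_compact closed_subspace sV compact_sphere)
  obtain v where v: "v \<in> V" "v \<noteq> 0" using nz sV subspace_0 by blast
  have "v /\<^sub>R norm v \<in> K" unfolding K_def using v sV
    by (simp add: subspace_scale)
  then have neK: "K \<noteq> {}" by blast
  have "continuous_on K q" unfolding q_def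
    by (intro continuous_intros)
  then obtain u where uK: "u \<in> K" and umax: "\<And>y. y \<in> K \<Longrightarrow> q y \<le> q u"
    using continuous_attains_sup[OF cK neK] by blast
  have uV: "u \<in> V" and nu: "norm u = 1" using uK unfolding K_def by auto
  have uu: "u \<bullet> u = 1" using nu by (simp add: dot_square_norm)
  define lam where "lam = q u"
  have qsc: "q (c *\<^sub>R z) = c^2 * q z" for c z
    unfolding q_def by (simp add: power2_eq_square matrix_vector_mult_scaleR)
  have bound: "q z \<le> lam * (z \<bullet> z)" if "z \<in> V" for z
  proof (cases "z = 0")
    case True then show ?thesis by (simp add: q_def)
  next
    case False
    have "z /\<^sub>R norm z \<in> K" unfolding K_def using that False sV by (simp add: subspace_scale)
    then have "q (z /\<^sub>R norm z) \<le> lam" using umax lam_def by blast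
    then have "q z / (norm z)^2 \<le> lam" using qsc[of "inverse (norm z)" z]
      by (simp add: power_inverse divide_inverse mult.commute)
    then have "q z \<le> lam * (norm z)^2" using False
      by (simp add: divide_le_eq)
    then show ?thesis by (simp add: dot_square_norm)
  qed
  have orth: "w \<bullet> (A *v u) = 0" if wV: "w \<in> V" and wu: "w \<bullet> u = 0" for w
  proof (rule ccontr)
    define c where "c = w \<bullet> (A *v u)"
    assume "w \<bullet> (A *v u) \<noteq> 0"
    then have c0: "c \<noteq> 0" by (simp add: c_def)
    define d where "d = q w - lam * (w \<bullet> w)"
    define s where "s = 1 / (\<bar>d\<bar> + 1)"
    have s0: "s > 0" by (simp add: s_def add_pos_nonneg)
    define t where "t = s * c"
    have "u + t *\<^sub>R w \<in> V" using uV wV sV by (simp add: subspace_add subspace_scale)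
    then have b: "q (u + t *\<^sub>R w) \<le> lam * ((u + t *\<^sub>R w) \<bullet> (u + t *\<^sub>R w))" by (rule bound)
    have s1: "u \<bullet> (A *v w) = c" using sym_dot[OF sym, of u w] by (simp add: c_def inner_commute)
    have "q (u + t *\<^sub>R w) = q u + 2 * t * c + t^2 * q w"
      unfolding q_def using s1
      by (simp add: matrix_vector_right_distrib matrix_vector_mult_scaleR inner_add_left inner_add_right
          c_def power2_eq_square algebra_simps)
    moreover have "(u + t *\<^sub>R w) \<bullet> (u + t *\<^sub>R w) = 1 + t^2 * (w \<bullet> w)"
      using uu wu by (simp add: inner_add_left inner_add_right inner_commute power2_eq_square algebra_simps)
    ultimately have "2 * t * c + t^2 * d \<le> 0" using b by (simp add: d_def lam_def algebra_simps)
    then have "s * c^2 * (2 + s * d) \<le> 0" by (simp add: t_def power2_eq_square algebra_simps)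
    moreover have "s * d > -1"
    proof -
      have "\<bar>s * d\<bar> < 1" using s0 by (simp add: s_def abs_mult field_simps)
      then show ?thesis by linarith
    qed
    moreover have "s * c^2 > 0" using s0 c0 by simp
    ultimately show False by (smt (verit) mult_pos_pos)
  qed
  define r where "r = A *v u - lam *\<^sub>R u"
  have rV: "r \<in> V" unfolding r_def using inv uV sV by (simp add: subspace_diff subspace_scale)
  have ru: "r \<bullet> u = 0" unfolding r_def using uu
    by (simp add: inner_diff_left inner_diff_right lam_def q_def inner_commute)
  have "r \<bullet> (A *v u) = 0" using orth[OF rV ru] .
  then have "r \<bullet> r = 0" using ru unfolding r_def[of] by (simp add: inner_diff_right)
    (* r . r = r . Au - lambda r . u *)
  then have "r = 0" by simp
  then show ?thesis using uV nu unfolding r_def lam_def q_def by auto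
qed

lemma eigbasis:
  fixes A :: "real^'n::finite^'n"
  assumes sym: "transpose A = A"
  shows "subspace V \<Longrightarrow> (\<forall>v\<in>V. A *v v \<in> V) \<Longrightarrow>
    \<exists>B. finite B \<and> B \<subseteq> V \<and> span B = V \<and> pairwise orthogonal B \<and>
      (\<forall>b\<in>B. norm b = 1 \<and> A *v b = (b \<bullet> (A *v b)) *\<^sub>R b)"
proof (induction "dim V" arbitrary: V rule: less_induct)
  case less
  show ?case
  proof (cases "V = {0}")
    case True
    then show ?thesis by (intro exI[of _ "{}"]) auto
  next
    case False
    obtain u where uV: "u \<in> V" and nu: "norm u = 1" and eu: "A *v u = (u \<bullet> (A *v u)) *\<^sub>R u"
      using max_eig[OF sym less.prems(1) False less.prems(2)] by blast
    have uu: "u \<bullet> u = 1" using nu by (simp add: dot_square_norm)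
    define V' where "V' = {w \<in> V. w \<bullet> u = 0}"
    have sV': "subspace V'" unfolding V'_def subspace_def using less.prems(1)
      by (auto simp: subspace_0 subspace_add subspace_scale inner_add_left)
    have iV': "\<forall>v\<in>V'. A *v v \<in> V'"
    proof
      fix v assume "v \<in> V'"
      then have "v \<in> V" "v \<bullet> u = 0" unfolding V'_def by auto
      moreover have "(A *v v) \<bullet> u = v \<bullet> (A *v u)" using sym_dot[OF sym, of v u] by simp
      ultimately show "A *v v \<in> V'" unfolding V'_def using less.prems(2) eu
        by (metis (mono_tags, lifting) inner_scaleR_right mem_Collect_eq mult_zero_right)
    qed
    have sub: "V' \<subset> V"
    proof -
      have "u \<notin> V'" unfolding V'_def using uu by auto
      then show ?thesis unfolding V'_def using uV by blast
    qed
    have "dim V' < dim V"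
      by (metis dim_psubset less.prems(1) sV' span_eq_iff sub)
    then obtain B' where B': "finite B'" "B' \<subseteq> V'" "span B' = V'" "pairwise orthogonal B'"
      "\<forall>b\<in>B'. norm b = 1 \<and> A *v b = (b \<bullet> (A *v b)) *\<^sub>R b"
      using less.hyps[OF _ sV' iV'] by blast
    have uB': "u \<notin> B'" using B'(2) uu V'_def by auto
    show ?thesis
    proof (intro exI[of _ "insert u B'"] conjI)
      show "finite (insert u B')" using B' by simp
      show "insert u B' \<subseteq> V" using B'(2) uV V'_def by auto
      show "span (insert u B') = V"
      proof
        show "span (insert u B') \<subseteq> V"
          using \<open>insert u B' \<subseteq> V\<close> less.prems(1) by (simp add: span_minimal)
        show "V \<subseteq> span (insert u B')"
        proof
          fix v assume vV: "v \<in> V"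
          have "v - (v \<bullet> u) *\<^sub>R u \<in> V'" unfolding V'_def using vV uV uu less.prems(1)
            by (simp add: subspace_diff subspace_scale inner_diff_left)
          then have "v - (v \<bullet> u) *\<^sub>R u \<in> span (insert u B')"
            using B'(3) span_mono[of B' "insert u B'"] by blast
          moreover have "(v \<bullet> u) *\<^sub>R u \<in> span (insert u B')" by (simp add: span_base span_scale)
          ultimately have "(v - (v \<bullet> u) *\<^sub>R u) + (v \<bullet> u) *\<^sub>R u \<in> span (insert u B')"
            by (rule span_add)
          then show "v \<in> span (insert u B')" by simp
        qed
      qed
      show "pairwise orthogonal (insert u B')"
        using B'(4) B'(2) unfolding pairwise_insert V'_def orthogonal_def
        by (auto simp: inner_commute)
      show "\<forall>b\<in>insert u B'. norm b = 1 \<and> A *v b = (b \<bullet> (A *v b)) *\<^sub>R b"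
        using B'(5) nu eu by auto
    qed
  qed
qed

lemma spanning_eq:
  fixes M N :: "real^'n::finite^'n"
  assumes "span B = UNIV" "\<forall>b\<in>B. M *v b = N *v b"
  shows "M = N"
proof -
  have sub: "subspace {x. M *v x = N *v x}"
    unfolding subspace_def by (simp add: matrix_vector_right_distrib matrix_vector_mult_scaleR)
  have "B \<subseteq> {x. M *v x = N *v x}" using assms(2) by auto
  then have "span B \<subseteq> {x. M *v x = N *v x}" using span_minimal sub by blast
  then show ?thesis using assms(1) unfolding matrix_eq by auto
qed

lemma sum_mat_vec:
  fixes M :: "'b \<Rightarrow> real^'n::finite^'m::finite"
  shows "(\<Sum>b\<in>B. M b) *v v = (\<Sum>b\<in>B. M b *v v)"
  by (induction B rule: infinite_finite_induct) (auto simp: matrix_vector_mult_add_rdistrib)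

lemma scaleR_mat_vec:
  fixes M :: "real^'n::finite^'m::finite"
  shows "(c *\<^sub>R M) *v v = c *\<^sub>R (M *v v)"
  by (simp add: vec_eq_iff matrix_vector_mult_def sum_distrib_left mult.assoc)

definition outer :: "real^'n::finite \<Rightarrow> real^'n^'n" where
  "outer b = (\<chi> i j. b$i * b$j)"

lemma outer_mult: "outer b *v v = (b \<bullet> v) *\<^sub>R b"
  by (simp add: vec_eq_iff outer_def matrix_vector_mult_def inner_vec_def sum_distrib_left
      sum_distrib_right mult.commute mult.left_commute)

lemma sqrt_ex1:
  fixes A :: "real^'n::finite^'n"
  assumes pd: "pos_def A"
  shows "\<exists>!R. pos_def R \<and> R ** R = A"
proof -
  have sym: "transpose A = A" using pd unfolding pos_def_def by auto
  obtain B where B: "finite B" "span B = UNIV" "pairwise orthogonal B"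
    "\<forall>b\<in>B. norm b = 1 \<and> A *v b = (b \<bullet> (A *v b)) *\<^sub>R b"
    using eigbasis[OF sym, of UNIV] by auto
  define lam where "lam b = b \<bullet> (A *v b)" for b
  define s where "s b = sqrt (lam b)" for b
  have lampos: "lam b > 0" if "b \<in> B" for b
  proof -
    have "b \<noteq> 0" using B(4) that by auto
    then show ?thesis using pd unfolding pos_def_def lam_def by auto
  qed
  have spos: "s b > 0" if "b \<in> B" for b using lampos[OF that] by (simp add: s_def)
  have ss: "s b * s b = lam b" if "b \<in> B" for b
    using lampos[OF that] by (simp add: s_def)
  have Ab: "A *v b = lam b *\<^sub>R b" if "b \<in> B" for b using B(4) that lam_def by auto
  have on: "b \<bullet> c = (if b = c then 1 else 0)" if "b \<in> B" "c \<in> B" for b c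
  proof (cases "b = c")
    case True then show ?thesis using B(4) that by (simp add: dot_square_norm)
  next
    case False then show ?thesis using B(3) that unfolding pairwise_def orthogonal_def by auto
  qed
  define R where "R = (\<Sum>b\<in>B. s b *\<^sub>R outer b)"
  have Rv: "R *v v = (\<Sum>b\<in>B. (s b * (b \<bullet> v)) *\<^sub>R b)" for v
    unfolding R_def sum_mat_vec by (simp add: scaleR_mat_vec outer_mult)
  have Rc: "R *v c = s c *\<^sub>R c" if "c \<in> B" for c
  proof -
    have "R *v c = (\<Sum>b\<in>B. if b = c then s c *\<^sub>R c else 0)"
      unfolding Rv using that by (intro sum.cong) (auto simp: on)
    also have "\<dots> = s c *\<^sub>R c" using B(1) that by simp
    finally show ?thesis .
  qed
  have Rij: "R $ i $ j = (\<Sum>b\<in>B. s b * (b$i * b$j))" for i j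
    unfolding R_def by (simp add: sum_component outer_def)
  have symR: "transpose R = R"
    by (simp add: vec_eq_iff transpose_def Rij mult.commute)
  have orth0: "v = 0" if "\<forall>b\<in>B. b \<bullet> v = 0" for v
  proof -
    have "orthogonal v v" using B(2) that
      by (metis UNIV_I inner_commute orthogonal_def orthogonal_to_span)
    then show ?thesis by (simp add: orthogonal_def)
  qed
  have pdR: "pos_def R" unfolding pos_def_def
  proof (intro conjI allI impI symR)
    fix v :: "real^'n" assume v0: "v \<noteq> 0"
    have eq: "v \<bullet> (R *v v) = (\<Sum>b\<in>B. s b * (b \<bullet> v)^2)"
      unfolding Rv by (simp add: inner_sum_right power2_eq_square inner_commute mult.assoc)
    obtain b where bB: "b \<in> B" and bv: "b \<bullet> v \<noteq> 0" using orth0 v0 by blast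
    have p1: "0 < s b * (b \<bullet> v)^2" using spos[OF bB] bv by simp
    have p2: "0 \<le> s i * (i \<bullet> v)^2" if "i \<in> B" for i using spos[OF that] by simp
    have "0 < (\<Sum>b\<in>B. s b * (b \<bullet> v)^2)"
      using sum_pos2[OF B(1) bB, of "\<lambda>b. s b * (b \<bullet> v)^2"] p1 p2 by blast
    then show "0 < v \<bullet> (R *v v)" using eq by simp
  qed
  have RR: "R ** R = A"
    using B(2) by (rule spanning_eq)
      (auto simp: matrix_vector_mul_assoc[symmetric] Rc Ab matrix_vector_mult_scaleR ss)
  have uniq: "C = R" if pdC: "pos_def C" and CC: "C ** C = A" for C
  proof (rule spanning_eq[OF B(2)], intro ballI)
    fix c assume cB: "c \<in> B"
    define w where "w = C *v c - s c *\<^sub>R c"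
    have "C *v w + s c *\<^sub>R w = (C ** C) *v c - (s c * s c) *\<^sub>R c"
      unfolding w_def by (simp add: matrix_vector_mul_assoc[symmetric] matrix_vector_right_distrib
          matrix_vector_mult_diff_distrib matrix_vector_mult_scaleR algebra_simps)
    also have "\<dots> = 0" using CC Ab[OF cB] ss[OF cB] by simp
    finally have "C *v w = - (s c *\<^sub>R w)" by (simp add: eq_neg_iff_add_eq_0)
    then have "w \<bullet> (C *v w) = - s c * (w \<bullet> w)" by simp
    also have "\<dots> \<le> 0" using spos[OF cB] by simp
    finally have "w = 0" using pdC unfolding pos_def_def by (meson not_le)
    then show "C *v c = R *v c" using Rc[OF cB] unfolding w_def by simp
  qed
  show ?thesis using pdR RR uniq by blast
qed

lemma msqrt_props:
  fixes A :: "real^'n::finite^'n"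
  assumes "pos_def A"
  shows "pos_def (msqrt A)" "msqrt A ** msqrt A = A"
  using theI'[OF sqrt_ex1[OF assms]] unfolding msqrt_def by auto

lemma pos_def_det:
  fixes A :: "real^'n::finite^'n"
  assumes "pos_def A"
  shows "det A > 0"
proof -
  have "det A = det (msqrt A) * det (msqrt A)"
    using msqrt_props[OF assms] det_mul by metis
  moreover have "det (msqrt A) \<noteq> 0"
    using pos_def_invertible[OF msqrt_props(1)[OF assms]] invertible_det_nz by blast
  ultimately show ?thesis by (simp add: zero_less_mult_iff) (metis linorder_neqE_linordered_idom)
qed

lemma pd_eq: "(f has_derivative D) (at x) \<Longrightarrow> pd i f x = D (axis i 1)"
  unfolding pd_def using frechet_derivative_at by metis

lemma diffD: "f differentiable (at x) \<Longrightarrow> (f has_derivative (\<lambda>h. frechet_derivative f (at x) h)) (at x)"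
  using frechet_derivative_works by (metis eta_contract_eq)

lemma pd_diffD: "f differentiable (at x) \<Longrightarrow> (f has_derivative (\<lambda>h. frechet_derivative f (at x) h)) (at x) \<and>
   frechet_derivative f (at x) (axis i 1) = pd i f x"
  using diffD unfolding pd_def by blast

lemma pd_local:
  assumes "open U" "x \<in> U" "\<And>z. z \<in> U \<Longrightarrow> f z = g z"
  shows "pd i f x = pd i g x"
proof -
  have "(f has_derivative D) (at x) \<longleftrightarrow> (g has_derivative D) (at x)" for D
    using has_derivative_transform_within_open[OF _ assms(1,2), of f D UNIV g]
      has_derivative_transform_within_open[OF _ assms(1,2), of g D UNIV f] assms(3) by auto
  then show ?thesis unfolding pd_def frechet_derivative_def by simp
qed

lemma diff_local:
  assumes "f differentiable (at x)" "open U" "x \<in> U" "\<And>z. z \<in> U \<Longrightarrow> f z = g z"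
  shows "g differentiable (at x)"
  using assms has_derivative_transform_within_open unfolding differentiable_def by blast

lemma pd_const[simp]: "pd i (\<lambda>z. c) x = 0"
  by (rule pd_eq[where D="\<lambda>h. 0", simplified]) simp

lemma pd_add:
  fixes f g :: "real^'n::finite \<Rightarrow> real"
  assumes "f differentiable (at x)" "g differentiable (at x)"
  shows "pd i (\<lambda>z. f z + g z) x = pd i f x + pd i g x"
  using pd_eq[OF has_derivative_add[OF diffD[OF assms(1)] diffD[OF assms(2)]]] by (simp add: pd_def)

lemma pd_diff:
  fixes f g :: "real^'n::finite \<Rightarrow> real"
  assumes "f differentiable (at x)" "g differentiable (at x)"
  shows "pd i (\<lambda>z. f z - g z) x = pd i f x - pd i g x"
  using pd_eq[OF has_derivative_diff[OF diffD[OF assms(1)] diffD[OF assms(2)]]] by (simp add: pd_def)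

lemma pd_mult:
  fixes f g :: "real^'n::finite \<Rightarrow> real"
  assumes "f differentiable (at x)" "g differentiable (at x)"
  shows "pd i (\<lambda>z. f z * g z) x = pd i f x * g x + f x * pd i g x"
  using pd_eq[OF has_derivative_mult[OF diffD[OF assms(1)] diffD[OF assms(2)]]] by (simp add: pd_def)

lemma pd_sum:
  fixes f :: "'a \<Rightarrow> real^'n::finite \<Rightarrow> real"
  assumes "finite S" "\<And>j. j \<in> S \<Longrightarrow> f j differentiable (at x)"
  shows "pd i (\<lambda>z. \<Sum>j\<in>S. f j z) x = (\<Sum>j\<in>S. pd i (f j) x)"
  using pd_eq[OF has_derivative_sum[of S f, OF diffD[OF assms(2)]]] by (simp add: pd_def)

lemma pd_cmult:
  fixes f :: "real^'n::finite \<Rightarrow> real"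
  assumes "f differentiable (at x)"
  shows "pd i (\<lambda>z. c * f z) x = c * pd i f x"
  using pd_mult[OF differentiable_const assms] by simp

lemma pd_uminus:
  fixes f :: "real^'n::finite \<Rightarrow> real"
  assumes "f differentiable (at x)"
  shows "pd i (\<lambda>z. - f z) x = - pd i f x"
  using pd_cmult[OF assms, where c="-1"] by simp

subsection \<open>Matrix valued functions\<close>

definition mdiff :: "(real^'n::finite \<Rightarrow> real^'m::finite^'k::finite) \<Rightarrow> real^'n \<Rightarrow> bool" where
  "mdiff A x \<longleftrightarrow> (\<forall>a b. (\<lambda>z. A z $ a $ b) differentiable (at x))"

definition dm :: "'n::finite \<Rightarrow> (real^'n \<Rightarrow> real^'m::finite^'k::finite) \<Rightarrow> real^'n \<Rightarrow> real^'m^'k" where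
  "dm i A x = (\<chi> a b. pd i (\<lambda>z. A z $ a $ b) x)"

lemma mdiff_const[simp]: "mdiff (\<lambda>z. C) x"
  by (simp add: mdiff_def)

lemma dm_const[simp]: "dm i (\<lambda>z. C) x = 0"
  by (simp add: dm_def vec_eq_iff)

lemma mdiff_add: "mdiff A x \<Longrightarrow> mdiff B x \<Longrightarrow> mdiff (\<lambda>z. A z + B z) x"
  by (simp add: mdiff_def differentiable_add)

lemma dm_add: "mdiff A x \<Longrightarrow> mdiff B x \<Longrightarrow> dm i (\<lambda>z. A z + B z) x = dm i A x + dm i B x"
  by (simp add: mdiff_def dm_def vec_eq_iff pd_add)

lemma mdiff_diff: "mdiff A x \<Longrightarrow> mdiff B x \<Longrightarrow> mdiff (\<lambda>z. A z - B z) x"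
  by (simp add: mdiff_def differentiable_diff)

lemma dm_diff: "mdiff A x \<Longrightarrow> mdiff B x \<Longrightarrow> dm i (\<lambda>z. A z - B z) x = dm i A x - dm i B x"
  by (simp add: mdiff_def dm_def vec_eq_iff pd_diff)

lemma mdiff_scaleR: "mdiff A x \<Longrightarrow> mdiff (\<lambda>z. c *\<^sub>R A z) x"
  by (simp add: mdiff_def differentiable_mult)

lemma dm_scaleR: "mdiff A x \<Longrightarrow> dm i (\<lambda>z. c *\<^sub>R A z) x = c *\<^sub>R dm i A x"
  by (simp add: mdiff_def dm_def vec_eq_iff pd_cmult)

lemma mdiff_uminus: "mdiff A x \<Longrightarrow> mdiff (\<lambda>z. - A z) x"
  by (simp add: mdiff_def differentiable_minus)

lemma dm_uminus: "mdiff A x \<Longrightarrow> dm i (\<lambda>z. - A z) x = - dm i A x"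
  by (simp add: mdiff_def dm_def vec_eq_iff pd_uminus)

lemma mult_entry: "(A ** B) $ a $ b = (\<Sum>k\<in>UNIV. A $ a $ k * B $ k $ b)"
  by (simp add: matrix_matrix_mult_def)

lemma mdiff_mult:
  fixes A :: "real^'n::finite \<Rightarrow> real^'m::finite^'k::finite" and B :: "real^'n \<Rightarrow> real^'l::finite^'m"
  assumes "mdiff A x" "mdiff B x"
  shows "mdiff (\<lambda>z. A z ** B z) x"
  unfolding mdiff_def mult_entry
proof (intro allI)
  fix a b
  show "(\<lambda>z. \<Sum>k\<in>UNIV. A z $ a $ k * B z $ k $ b) differentiable at x"
    using assms unfolding mdiff_def by (intro differentiable_sum ballI differentiable_mult) auto
qed

lemma dm_mult:
  fixes A :: "real^'n::finite \<Rightarrow> real^'m::finite^'k::finite" and B :: "real^'n \<Rightarrow> real^'l::finite^'m"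
  assumes "mdiff A x" "mdiff B x"
  shows "dm i (\<lambda>z. A z ** B z) x = dm i A x ** B x + A x ** dm i B x"
proof -
  have "pd i (\<lambda>z. \<Sum>k\<in>UNIV. A z $ a $ k * B z $ k $ b) x =
      (\<Sum>k\<in>UNIV. pd i (\<lambda>z. A z $ a $ k) x * B x $ k $ b + A x $ a $ k * pd i (\<lambda>z. B z $ k $ b) x)" for a b
  proof -
    have "pd i (\<lambda>z. \<Sum>k\<in>UNIV. A z $ a $ k * B z $ k $ b) x =
        (\<Sum>k\<in>UNIV. pd i (\<lambda>z. A z $ a $ k * B z $ k $ b) x)"
      using assms unfolding mdiff_def by (intro pd_sum) (auto intro!: differentiable_mult)
    also have "\<dots> = (\<Sum>k\<in>UNIV. pd i (\<lambda>z. A z $ a $ k) x * B x $ k $ b + A x $ a $ k * pd i (\<lambda>z. B z $ k $ b) x)"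
      using assms unfolding mdiff_def by (intro sum.cong refl pd_mult) auto
    finally show ?thesis .
  qed
  then show ?thesis
    unfolding dm_def mult_entry vec_eq_iff by (simp add: mult_entry sum.distrib)
qed

lemma mdiff_local:
  assumes "mdiff A x" "open U" "x \<in> U" "\<And>z. z \<in> U \<Longrightarrow> A z = B z"
  shows "mdiff B x"
  unfolding mdiff_def
proof (intro allI)
  fix a b
  show "(\<lambda>z. B z $ a $ b) differentiable at x"
    using diff_local[OF _ assms(2,3), of "\<lambda>z. A z $ a $ b" "\<lambda>z. B z $ a $ b"] assms(1,4)
    unfolding mdiff_def by auto
qed

lemma dm_local:
  assumes "open U" "x \<in> U" "\<And>z. z \<in> U \<Longrightarrow> A z = B z"
  shows "dm i A x = dm i B x"
proof -
  have "pd i (\<lambda>z. A z $ a $ b) x = pd i (\<lambda>z. B z $ a $ b) x" for a b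
    by (rule pd_local[OF assms(1,2)]) (simp add: assms(3))
  then show ?thesis unfolding dm_def by simp
qed

lemma vec_axis_sum: "(\<Sum>l\<in>UNIV. (v$l) *s axis l (1::real)) = (v :: real^'n::finite)"
proof -
  have "(\<Sum>l\<in>UNIV. v $ l * (if i = l then 1 else 0)) = v $ i" for i
  proof -
    have "(\<Sum>l\<in>UNIV. v $ l * (if i = l then 1 else 0)) = (\<Sum>l\<in>UNIV. if l = i then v $ l else 0)"
      by (intro sum.cong refl) auto
    then show ?thesis by simp
  qed
  then show ?thesis by (simp add: vec_eq_iff sum_component axis_def)
qed

definition cof :: "real^'n::finite^'n \<Rightarrow> 'n \<Rightarrow> 'n \<Rightarrow> real" where
  "cof A k l = det (\<chi> r. if r = k then axis l 1 else row r A)"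

lemma row_expand:
  fixes A :: "real^'n::finite^'n"
  shows "det (\<chi> r. if r = k then v else row r A) = (\<Sum>l\<in>UNIV. v$l * cof A k l)"
proof -
  have "det (\<chi> r. if r = k then v else row r A) =
      det (\<chi> r. if r = k then (\<Sum>l\<in>UNIV. (v$l) *s axis l (1::real)) else row r A)"
    unfolding vec_axis_sum ..
  also have "\<dots> = (\<Sum>l\<in>UNIV. det (\<chi> r. if r = k then (v$l) *s axis l (1::real) else row r A))"
    by (rule det_linear_row_sum) simp
  also have "\<dots> = (\<Sum>l\<in>UNIV. v$l * cof A k l)"
    unfolding cof_def by (intro sum.cong refl) (rule det_row_mul)
  finally show ?thesis .
qed

lemma adj_prop:
  fixes A :: "real^'n::finite^'n"
  shows "(\<Sum>l\<in>UNIV. A$a$l * cof A b l) = (if a = b then det A else 0)"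
proof -
  define M where "M = (\<chi> r. if r = b then row a A else row r A)"
  have rowa: "row a A $ l = A $ a $ l" for l by (simp add: row_def)
  have "det M = (\<Sum>l\<in>UNIV. row a A $ l * cof A b l)" unfolding M_def by (rule row_expand)
  then have e: "(\<Sum>l\<in>UNIV. A$a$l * cof A b l) = det M" by (simp add: rowa)
  show ?thesis
  proof (cases "a = b")
    case True
    have "M = A" unfolding M_def using True by (simp add: vec_eq_iff row_def)
    then show ?thesis using True e by simp
  next
    case False
    have "row a M = row a A" "row b M = row a A" using False unfolding M_def by (simp_all add: row_def)
    then have "det M = 0" using det_identical_rows[OF False, of M] by simp
    then show ?thesis using False e by simp
  qed
qed

lemma inv_cof:
  fixes A :: "real^'n::finite^'n"
  assumes "det A \<noteq> 0"
  shows "matrix_inv A $ l $ b = cof A b l / det A"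
proof -
  define C where "C = (\<chi> l b. cof A b l / det A)"
  have ent: "(A ** C) $ a $ b = mat 1 $ a $ b" for a b
  proof -
    have "(A ** C) $ a $ b = (\<Sum>k\<in>UNIV. A $ a $ k * (cof A b k / det A))"
      by (simp add: mult_entry C_def)
    also have "\<dots> = (\<Sum>k\<in>UNIV. A $ a $ k * cof A b k) / det A"
      by (simp add: sum_divide_distrib)
    also have "\<dots> = (if a = b then 1 else 0)" using adj_prop[of A a b] assms by simp
    finally show ?thesis by (simp add: mat_def)
  qed
  have "A ** C = mat 1" using ent by (simp add: vec_eq_iff)
  then have "matrix_inv A = C" by (rule inv_unique)
  then show ?thesis by (simp add: C_def)
qed

lemma det_expand: "det A = (\<Sum>p\<in>{p. p permutes (UNIV::'n::finite set)}. of_int (sign p) * (\<Prod>i\<in>UNIV. A $ i $ p i))"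
  by (simp add: det_def)

lemma mdiff_det:
  fixes A :: "real^'n::finite \<Rightarrow> real^'m::finite^'m"
  assumes "mdiff A x"
  shows "(\<lambda>z. det (A z)) differentiable (at x)"
proof -
  have "(\<lambda>z. \<Sum>p\<in>{p. p permutes (UNIV::'m set)}. of_int (sign p) * (\<Prod>i\<in>UNIV. A z $ i $ p i)) differentiable (at x)"
  proof (intro differentiable_sum ballI differentiable_mult differentiable_const)
    fix p :: "'m \<Rightarrow> 'm"
    have "\<forall>i\<in>UNIV. ((\<lambda>z. A z $ i $ p i) has_derivative frechet_derivative (\<lambda>z. A z $ i $ p i) (at x)) (at x)"
      using assms unfolding mdiff_def using frechet_derivative_works by blast
    from has_derivative_prod[of UNIV "\<lambda>i z. A z $ i $ p i", OF this[rule_format]]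
    show "(\<lambda>z. \<Prod>i\<in>UNIV. A z $ i $ p i) differentiable at x" unfolding differentiable_def by blast
  qed (simp add: finite_permutations)
  then show ?thesis by (simp add: det_expand)
qed

lemma pd_det_rows:
  fixes A :: "real^'n::finite \<Rightarrow> real^'m::finite^'m"
  assumes "mdiff A x"
  shows "pd i (\<lambda>z. det (A z)) x = (\<Sum>k\<in>UNIV. det (\<chi> r. if r = k then row k (dm i A x) else row r (A x)))"
proof -
  let ?P = "{p. p permutes (UNIV::'m set)}"
  define D where "D r c = frechet_derivative (\<lambda>z. A z $ r $ c) (at x)" for r c
  have hd: "((\<lambda>z. A z $ r $ c) has_derivative D r c) (at x)" for r c
    using assms unfolding mdiff_def D_def using frechet_derivative_works by blast
  have Dv: "D r c (axis i 1) = dm i A x $ r $ c" for r c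
    by (simp add: D_def dm_def pd_def)
  have hp: "((\<lambda>z. \<Prod>r\<in>UNIV. A z $ r $ p r) has_derivative
      (\<lambda>h. \<Sum>k\<in>UNIV. D k (p k) h * (\<Prod>r\<in>UNIV - {k}. A x $ r $ p r))) (at x)" for p :: "'m \<Rightarrow> 'm"
    using has_derivative_prod[of UNIV "\<lambda>r z. A z $ r $ p r" "\<lambda>r. D r (p r)" x UNIV] hd by blast
  have hs: "((\<lambda>z. \<Sum>p\<in>?P. of_int (sign p) * (\<Prod>r\<in>UNIV. A z $ r $ p r)) has_derivative
      (\<lambda>h. \<Sum>p\<in>?P. of_int (sign p) * (\<Sum>k\<in>UNIV. D k (p k) h * (\<Prod>r\<in>UNIV - {k}. A x $ r $ p r)))) (at x)"
    by (rule has_derivative_sum) (rule has_derivative_mult_right[OF hp])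
  have "pd i (\<lambda>z. det (A z)) x =
      (\<Sum>p\<in>?P. of_int (sign p) * (\<Sum>k\<in>UNIV. dm i A x $ k $ p k * (\<Prod>r\<in>UNIV - {k}. A x $ r $ p r)))"
    using pd_eq[OF hs, of i] unfolding det_expand by (simp only: Dv)
  also have "\<dots> = (\<Sum>k\<in>UNIV. \<Sum>p\<in>?P. of_int (sign p) * (dm i A x $ k $ p k * (\<Prod>r\<in>UNIV - {k}. A x $ r $ p r)))"
    by (subst sum.swap) (simp add: sum_distrib_left)
  also have "\<dots> = (\<Sum>k\<in>UNIV. det (\<chi> r. if r = k then row k (dm i A x) else row r (A x)))"
  proof (intro sum.cong refl)
    fix k
    have "(\<Prod>r\<in>UNIV. (\<chi> r. if r = k then row k (dm i A x) else row r (A x)) $ r $ p r) =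
        dm i A x $ k $ p k * (\<Prod>r\<in>UNIV - {k}. A x $ r $ p r)" for p :: "'m \<Rightarrow> 'm"
    proof -
      have "(\<Prod>r\<in>UNIV. (\<chi> r. if r = k then row k (dm i A x) else row r (A x)) $ r $ p r) =
          (\<chi> r. if r = k then row k (dm i A x) else row r (A x)) $ k $ p k *
          (\<Prod>r\<in>UNIV - {k}. (\<chi> r. if r = k then row k (dm i A x) else row r (A x)) $ r $ p r)"
        by (rule prod.remove) auto
      also have "\<dots> = dm i A x $ k $ p k * (\<Prod>r\<in>UNIV - {k}. A x $ r $ p r)"
        by (simp add: row_def)
      finally show ?thesis .
    qed
    then show "(\<Sum>p\<in>?P. of_int (sign p) * (dm i A x $ k $ p k * (\<Prod>r\<in>UNIV - {k}. A x $ r $ p r))) =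
        det (\<chi> r. if r = k then row k (dm i A x) else row r (A x))"
      unfolding det_expand by simp
  qed
  finally show ?thesis .
qed

lemma pd_det:
  fixes A :: "real^'n::finite \<Rightarrow> real^'m::finite^'m"
  assumes "mdiff A x" "invertible (A x)"
  shows "pd i (\<lambda>z. det (A z)) x = det (A x) * trace (matrix_inv (A x) ** dm i A x)"
proof -
  have dn: "det (A x) \<noteq> 0" using assms(2) by (simp add: invertible_det_nz)
  have c: "cof (A x) k l = det (A x) * matrix_inv (A x) $ l $ k" for k l
    using inv_cof[OF dn, of l k] dn by (simp add: field_simps)
  have s1: "pd i (\<lambda>z. det (A z)) x = (\<Sum>k\<in>UNIV. \<Sum>l\<in>UNIV. row k (dm i A x) $ l * cof (A x) k l)"
    unfolding pd_det_rows[OF assms(1)] row_expand ..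
  have s2: "(\<Sum>k\<in>UNIV. \<Sum>l\<in>UNIV. row k (dm i A x) $ l * cof (A x) k l) =
     (\<Sum>k\<in>UNIV. \<Sum>l\<in>UNIV. det (A x) * (dm i A x $ k $ l * matrix_inv (A x) $ l $ k))"
    by (intro sum.cong refl) (simp add: row_def c)
  have s3: "(\<Sum>k\<in>UNIV. \<Sum>l\<in>UNIV. det (A x) * (dm i A x $ k $ l * matrix_inv (A x) $ l $ k)) =
     det (A x) * trace (dm i A x ** matrix_inv (A x))"
    by (simp add: sum_distrib_left trace_def mult_entry)
  show ?thesis by (simp only: s1 s2 s3 trace_mul_sym[of "dm i A x" "matrix_inv (A x)"])
qed

lemma det_nz_near:
  fixes A :: "real^'n::finite \<Rightarrow> real^'m::finite^'m"
  assumes "mdiff A x" "det (A x) \<noteq> 0"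
  shows "\<exists>e>0. \<forall>z\<in>ball x e. det (A z) \<noteq> 0"
proof -
  have "continuous (at x) (\<lambda>z. det (A z))"
    using differentiable_imp_continuous_within[OF mdiff_det[OF assms(1)]] .
  from continuous_at_avoid[OF this assms(2)] show ?thesis by (auto simp: ball_def)
qed

lemma mdiff_inv:
  fixes A :: "real^'n::finite \<Rightarrow> real^'m::finite^'m"
  assumes "mdiff A x" "invertible (A x)"
  shows "mdiff (\<lambda>z. matrix_inv (A z)) x"
proof -
  obtain e where e: "e > 0" "\<forall>z\<in>ball x e. det (A z) \<noteq> 0"
    using det_nz_near[OF assms(1)] assms(2) invertible_det_nz by blast
  show ?thesis unfolding mdiff_def
  proof (intro allI)
    fix l b
    define M where "M z = (\<chi> r. if r = b then axis l 1 else row r (A z))" for z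
    have "mdiff M x" unfolding mdiff_def
    proof (intro allI)
      fix r c
      show "(\<lambda>z. M z $ r $ c) differentiable at x"
      proof (cases "r = b")
        case True then show ?thesis by (simp add: M_def)
      next
        case False then show ?thesis using assms(1) by (simp add: M_def mdiff_def row_def)
      qed
    qed
    then have "(\<lambda>z. det (M z) / det (A z)) differentiable at x"
      using mdiff_det[OF \<open>mdiff M x\<close>] mdiff_det[OF assms(1)] e by (intro differentiable_divide) auto
    then show "(\<lambda>z. matrix_inv (A z) $ l $ b) differentiable at x"
      by (rule diff_local[OF _ open_ball centre_in_ball[THEN iffD2, OF e(1)]])
        (simp add: inv_cof e(2) M_def cof_def)
  qed
qed

lemma mmul_zero: "(A::real^'n::finite^'m::finite) ** (0::real^'k::finite^'n) = 0"
  by (simp add: matrix_matrix_mult_def vec_eq_iff)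

lemma dm_inv:
  fixes A :: "real^'n::finite \<Rightarrow> real^'m::finite^'m"
  assumes "mdiff A x" "invertible (A x)"
  shows "dm i (\<lambda>z. matrix_inv (A z)) x = - (matrix_inv (A x) ** dm i A x ** matrix_inv (A x))"
proof -
  obtain e where e: "e > 0" "\<forall>z\<in>ball x e. det (A z) \<noteq> 0"
    using det_nz_near[OF assms(1)] assms(2) invertible_det_nz by blast
  define W where "W = matrix_inv (A x)"
  define dA where "dA = dm i A x"
  define dW where "dW = dm i (\<lambda>z. matrix_inv (A z)) x"
  have loc: "A z ** matrix_inv (A z) = mat 1" if "z \<in> ball x e" for z
  proof -
    have "invertible (A z)" using e(2) that invertible_det_nz by blast
    then show ?thesis by (rule inv_props(1))
  qed
  have "dm i (\<lambda>z. A z ** matrix_inv (A z)) x = dm i (\<lambda>z. mat 1) x"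
    by (rule dm_local[OF open_ball centre_in_ball[THEN iffD2, OF e(1)]]) (rule loc)
  then have eq: "dA ** W + A x ** dW = 0"
    unfolding dm_mult[OF assms(1) mdiff_inv[OF assms]] dm_const W_def dA_def dW_def .
  have WA: "W ** A x = mat 1" unfolding W_def by (rule inv_props(2)[OF assms(2)])
  have "W ** (dA ** W + A x ** dW) = W ** dA ** W + (W ** A x) ** dW"
    by (simp only: matrix_add_ldistrib matrix_mul_assoc)
  also have "\<dots> = W ** dA ** W + dW" by (simp only: WA matrix_mul_lid)
  finally have "W ** dA ** W + dW = 0" using eq by (simp add: mmul_zero)
  then have "dW = - (W ** dA ** W)" by (simp add: eq_neg_iff_add_eq_0 add.commute)
  then show ?thesis unfolding W_def dA_def dW_def .
qed

lemma pd_lnpowr: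
  fixes f :: "real^'n::finite \<Rightarrow> real"
  assumes "f differentiable (at x)" "f x > 0"
  shows "pd i (\<lambda>z. ln (f z powr (1/2))) x = pd i f x / (2 * f x)"
proof -
  have h: "((\<lambda>z. ln (f z)) has_derivative (\<lambda>h. frechet_derivative f (at x) h * inverse (f x))) (at x)"
    by (rule DERIV_compose_FDERIV[where g=f, OF DERIV_ln[OF assms(2)] diffD[OF assms(1)]])
  have h2: "((\<lambda>z. (1/2) * ln (f z)) has_derivative
      (\<lambda>h. (1/2) * (frechet_derivative f (at x) h * inverse (f x)))) (at x)"
    by (rule has_derivative_mult_right[OF h])
  have fe: "(\<lambda>z. ln (f z powr (1/2))) = (\<lambda>z. (1/2) * ln (f z))"
    by (rule ext) (rule ln_powr)
  have "pd i (\<lambda>z. ln (f z powr (1/2))) x = (1/2) * (pd i f x * inverse (f x))"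
    unfolding fe pd_eq[OF h2] by (simp only: pd_def)
  also have "\<dots> = pd i f x / (2 * f x)" by (simp add: inverse_eq_divide)
  finally show ?thesis .
qed

lemma line_deriv:
  fixes f :: "real^'n::finite \<Rightarrow> real"
  assumes "f differentiable (at (p + s *\<^sub>R u))"
  shows "((\<lambda>t. f (p + t *\<^sub>R u)) has_derivative (\<lambda>h. h * frechet_derivative f (at (p + s *\<^sub>R u)) u)) (at s within X)"
proof -
  have l: "((\<lambda>t. p + t *\<^sub>R u) has_derivative (\<lambda>h. h *\<^sub>R u)) (at s within X)"
    by (intro derivative_eq_intros) auto
  have d: "(f has_derivative frechet_derivative f (at (p + s *\<^sub>R u))) (at (p + s *\<^sub>R u))"
    using assms frechet_derivative_works by blast
  have lin: "linear (frechet_derivative f (at (p + s *\<^sub>R u)))"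
    using d has_derivative_linear by blast
  from has_derivative_compose[OF l d] show ?thesis
    by (simp add: linear.scaleR[OF lin])
qed

lemma mixed_mvt:
  fixes g :: "real^'n::finite \<Rightarrow> real"
  assumes t: "t > 0"
    and inU: "\<And>s r. 0 \<le> s \<Longrightarrow> s \<le> t \<Longrightarrow> 0 \<le> r \<Longrightarrow> r \<le> t \<Longrightarrow> y + s *\<^sub>R axis k 1 + r *\<^sub>R axis j 1 \<in> U"
    and dg: "\<forall>z\<in>U. g differentiable (at z)"
    and dk: "\<forall>z\<in>U. pd k g differentiable (at z)"
  shows "\<exists>s r. 0 < s \<and> s < t \<and> 0 < r \<and> r < t \<and>
     g (y + t *\<^sub>R axis k 1 + t *\<^sub>R axis j 1) - g (y + t *\<^sub>R axis k 1) - g (y + t *\<^sub>R axis j 1) + g y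
       = t * t * pd j (pd k g) (y + s *\<^sub>R axis k 1 + r *\<^sub>R axis j 1)"
proof -
  define ek ej where "ek = axis k (1::real)" and "ej = axis j (1::real)"
  define \<phi> where "\<phi> s = g ((y + t *\<^sub>R ej) + s *\<^sub>R ek) - g (y + s *\<^sub>R ek)" for s
  have inU': "y + s *\<^sub>R ek + r *\<^sub>R ej \<in> U" if "0 \<le> s" "s \<le> t" "0 \<le> r" "r \<le> t" for s r
    using inU[OF that] unfolding ek_def ej_def .
  have p1: "(y + t *\<^sub>R ej) + s *\<^sub>R ek = y + s *\<^sub>R ek + t *\<^sub>R ej" for s by (simp add: algebra_simps)
  have p2: "y + s *\<^sub>R ek = y + s *\<^sub>R ek + 0 *\<^sub>R ej" for s by simp
  have dphi: "(\<phi> has_derivative (\<lambda>h. h * (pd k g ((y + t *\<^sub>R ej) + s *\<^sub>R ek) - pd k g (y + s *\<^sub>R ek)))) (at s within {0..t})"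
    if s0: "0 \<le> s" "s \<le> t" for s
  proof -
    have s: "s \<in> {0..t}" using s0 by auto
    have "(y + t *\<^sub>R ej) + s *\<^sub>R ek \<in> U" unfolding p1 using inU'[of s t] s t by auto
    then have a: "g differentiable (at ((y + t *\<^sub>R ej) + s *\<^sub>R ek))" using dg by auto
    have "y + s *\<^sub>R ek \<in> U" using inU'[of s 0] s t by auto
    then have b: "g differentiable (at (y + s *\<^sub>R ek))" using dg by auto
    have "(\<phi> has_derivative (\<lambda>h. h * frechet_derivative g (at ((y + t *\<^sub>R ej) + s *\<^sub>R ek)) ek -
        h * frechet_derivative g (at (y + s *\<^sub>R ek)) ek)) (at s within {0..t})"
      unfolding \<phi>_def by (intro has_derivative_diff line_deriv a b)
    then show "(\<phi> has_derivative (\<lambda>h. h * (pd k g ((y + t *\<^sub>R ej) + s *\<^sub>R ek) - pd k g (y + s *\<^sub>R ek)))) (at s within {0..t})"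
      by (simp add: pd_def ek_def right_diff_distrib)
  qed
  from mvt_simple[OF t dphi] obtain s where s: "s \<in> {0<..<t}"
    and es: "\<phi> t - \<phi> 0 = (t - 0) * (pd k g ((y + t *\<^sub>R ej) + s *\<^sub>R ek) - pd k g (y + s *\<^sub>R ek))"
    by auto
  define \<psi> where "\<psi> r = pd k g ((y + s *\<^sub>R ek) + r *\<^sub>R ej)" for r
  have dpsi: "(\<psi> has_derivative (\<lambda>h. h * pd j (pd k g) ((y + s *\<^sub>R ek) + r *\<^sub>R ej))) (at r within {0..t})"
    if r0: "0 \<le> r" "r \<le> t" for r
  proof -
    have r: "r \<in> {0..t}" using r0 by auto
    have a: "pd k g differentiable (at ((y + s *\<^sub>R ek) + r *\<^sub>R ej))"
      using dk inU'[of s r] s r by auto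
    show "(\<psi> has_derivative (\<lambda>h. h * pd j (pd k g) ((y + s *\<^sub>R ek) + r *\<^sub>R ej))) (at r within {0..t})"
      unfolding \<psi>_def using line_deriv[OF a] by (simp add: pd_def[of j] ej_def)
  qed
  from mvt_simple[OF t dpsi] obtain r where r: "r \<in> {0<..<t}"
    and er: "\<psi> t - \<psi> 0 = (t - 0) * pd j (pd k g) ((y + s *\<^sub>R ek) + r *\<^sub>R ej)"
    by auto
  have "g (y + t *\<^sub>R ek + t *\<^sub>R ej) - g (y + t *\<^sub>R ek) - g (y + t *\<^sub>R ej) + g y = \<phi> t - \<phi> 0"
    unfolding \<phi>_def by (simp add: algebra_simps)
  also have "\<dots> = t * (\<psi> t - \<psi> 0)" using es unfolding \<psi>_def by (simp add: p1)
  also have "\<dots> = t * t * pd j (pd k g) (y + s *\<^sub>R ek + r *\<^sub>R ej)" using er by simp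
  finally show ?thesis using s r unfolding ek_def ej_def by auto
qed

lemma norm2_bound:
  fixes s r :: real
  shows "norm (s *\<^sub>R axis k (1::real) + r *\<^sub>R (axis j 1 :: real^'n::finite)) \<le> \<bar>s\<bar> + \<bar>r\<bar>"
  using norm_triangle_ineq[of "s *\<^sub>R axis k (1::real)" "r *\<^sub>R (axis j 1 :: real^'n)"] by simp

lemma abs_contra:
  fixes p q u v :: real
  shows "\<bar>p - u\<bar> < \<bar>u - v\<bar> / 2 \<Longrightarrow> \<bar>q - v\<bar> < \<bar>u - v\<bar> / 2 \<Longrightarrow> p = q \<Longrightarrow> False"
  by (auto simp: abs_if split: if_split_asm)

lemma schwarz:
  fixes g :: "real^'n::finite \<Rightarrow> real"
  assumes U: "open U" and y: "y \<in> U"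
    and dg: "\<forall>z\<in>U. g differentiable (at z)"
    and dk: "\<forall>z\<in>U. pd k g differentiable (at z)"
    and dj: "\<forall>z\<in>U. pd j g differentiable (at z)"
    and ca: "continuous (at y) (pd j (pd k g))"
    and cb: "continuous (at y) (pd k (pd j g))"
  shows "pd j (pd k g) y = pd k (pd j g) y"
proof (rule ccontr)
  define a where "a = pd j (pd k g)"
  define b where "b = pd k (pd j g)"
  assume "pd j (pd k g) y \<noteq> pd k (pd j g) y"
  then have ne: "a y \<noteq> b y" unfolding a_def b_def .
  define \<epsilon> where "\<epsilon> = \<bar>a y - b y\<bar> / 2"
  have e0: "\<epsilon> > 0" using ne by (simp add: \<epsilon>_def)
  obtain r where r: "r > 0" "ball y r \<subseteq> U" using U y open_contains_ball by blast
  obtain d1 where d1: "d1 > 0" "\<And>z. dist z y < d1 \<Longrightarrow> dist (a z) (a y) < \<epsilon>"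
    using ca e0 unfolding continuous_at_eps_delta a_def by blast
  obtain d2 where d2: "d2 > 0" "\<And>z. dist z y < d2 \<Longrightarrow> dist (b z) (b y) < \<epsilon>"
    using cb e0 unfolding continuous_at_eps_delta b_def by blast
  define t where "t = min r (min d1 d2) / 3"
  have t0: "t > 0" using r d1 d2 by (simp add: t_def)
  have close: "dist (y + s *\<^sub>R axis p 1 + q *\<^sub>R axis m 1) y < min r (min d1 d2)"
    if "0 \<le> s" "s \<le> t" "0 \<le> q" "q \<le> t" for s q p m
  proof -
    have "dist (y + s *\<^sub>R axis p 1 + q *\<^sub>R axis m 1) y = norm (s *\<^sub>R axis p (1::real) + q *\<^sub>R (axis m 1 :: real^'n))"
      by (simp add: dist_norm algebra_simps)
    also have "\<dots> \<le> \<bar>s\<bar> + \<bar>q\<bar>" by (rule norm2_bound)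
    also have "\<dots> \<le> 2 * t" using that by simp
    also have "\<dots> < min r (min d1 d2)" using t0 unfolding t_def by linarith
    finally show ?thesis .
  qed
  have inU: "y + s *\<^sub>R axis p 1 + q *\<^sub>R axis m 1 \<in> U"
    if "0 \<le> s" "s \<le> t" "0 \<le> q" "q \<le> t" for s q p m
    using close[OF that, of p m] r(2) by (auto simp: ball_def dist_commute)
  obtain s1 r1 where sr1: "0 < s1" "s1 < t" "0 < r1" "r1 < t"
    and e1: "g (y + t *\<^sub>R axis k 1 + t *\<^sub>R axis j 1) - g (y + t *\<^sub>R axis k 1) - g (y + t *\<^sub>R axis j 1) + g y
       = t * t * a (y + s1 *\<^sub>R axis k 1 + r1 *\<^sub>R axis j 1)"
    using mixed_mvt[OF t0 inU dg dk] unfolding a_def by blast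
  obtain s2 r2 where sr2: "0 < s2" "s2 < t" "0 < r2" "r2 < t"
    and e2: "g (y + t *\<^sub>R axis j 1 + t *\<^sub>R axis k 1) - g (y + t *\<^sub>R axis j 1) - g (y + t *\<^sub>R axis k 1) + g y
       = t * t * b (y + s2 *\<^sub>R axis j 1 + r2 *\<^sub>R axis k 1)"
    using mixed_mvt[OF t0 inU dg dj] unfolding b_def by blast
  have pt: "y + t *\<^sub>R axis j 1 + t *\<^sub>R axis k 1 = y + t *\<^sub>R axis k 1 + t *\<^sub>R axis j (1::real)"
    by (simp add: algebra_simps)
  have e2': "g (y + t *\<^sub>R axis k 1 + t *\<^sub>R axis j 1) - g (y + t *\<^sub>R axis j 1) - g (y + t *\<^sub>R axis k 1) + g y
       = t * t * b (y + s2 *\<^sub>R axis j 1 + r2 *\<^sub>R axis k 1)"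
    using e2 unfolding pt .
  have "t * t * a (y + s1 *\<^sub>R axis k 1 + r1 *\<^sub>R axis j 1) = t * t * b (y + s2 *\<^sub>R axis j 1 + r2 *\<^sub>R axis k 1)"
    using e1 e2' by linarith
  then have eqab: "a (y + s1 *\<^sub>R axis k 1 + r1 *\<^sub>R axis j 1) = b (y + s2 *\<^sub>R axis j 1 + r2 *\<^sub>R axis k 1)"
    using t0 by simp
  have "dist (a (y + s1 *\<^sub>R axis k 1 + r1 *\<^sub>R axis j 1)) (a y) < \<epsilon>"
    using d1(2) close[of s1 r1 k j] sr1 by simp
  moreover have "dist (b (y + s2 *\<^sub>R axis j 1 + r2 *\<^sub>R axis k 1)) (b y) < \<epsilon>"
    using d2(2) close[of s2 r2 j k] sr2 by simp
  ultimately show False using eqab unfolding \<epsilon>_def dist_real_def by (rule abs_contra)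
qed

lemma mm_add_r: "((A::real^'n::finite^'m::finite) + B) ** (C::real^'k::finite^'n) = A ** C + B ** C"
  by (simp add: vec_eq_iff mult_entry sum.distrib distrib_right)
lemma mm_diff_r: "((A::real^'n::finite^'m::finite) - B) ** (C::real^'k::finite^'n) = A ** C - B ** C"
  by (simp add: vec_eq_iff mult_entry sum_subtractf left_diff_distrib)
lemma mm_diff_l: "(A::real^'n::finite^'m::finite) ** ((B::real^'k::finite^'n) - C) = A ** B - A ** C"
  by (simp add: vec_eq_iff mult_entry sum_subtractf right_diff_distrib)
lemma mm_scale_l: "(c *\<^sub>R (A::real^'n::finite^'m::finite)) ** (B::real^'k::finite^'n) = c *\<^sub>R (A ** B)"
  by (simp add: vec_eq_iff mult_entry sum_distrib_left mult.assoc)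
lemma mm_scale_r: "(A::real^'n::finite^'m::finite) ** (c *\<^sub>R (B::real^'k::finite^'n)) = c *\<^sub>R (A ** B)"
  by (simp add: vec_eq_iff mult_entry sum_distrib_left mult.left_commute)
lemma mm_neg_l: "(- (A::real^'n::finite^'m::finite)) ** (B::real^'k::finite^'n) = - (A ** B)"
  by (simp add: vec_eq_iff mult_entry sum_negf)
lemma mm_neg_r: "(A::real^'n::finite^'m::finite) ** (- (B::real^'k::finite^'n)) = - (A ** B)"
  by (simp add: vec_eq_iff mult_entry sum_negf)
lemma mm_zero_l: "(0::real^'n::finite^'m::finite) ** (B::real^'k::finite^'n) = 0"
  by (simp add: vec_eq_iff mult_entry)
lemma tr_scale: "trace (c *\<^sub>R (A::real^'n::finite^'n)) = c * trace A"
  by (simp add: trace_def sum_distrib_left)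
lemma tp_add: "transpose ((A::real^'n::finite^'m::finite) + B) = transpose A + transpose B"
  by (simp add: vec_eq_iff transpose_def)
lemma tp_neg: "transpose (- (A::real^'n::finite^'m::finite)) = - transpose A"
  by (simp add: vec_eq_iff transpose_def)

lemma sum_sym_antisym:
  fixes S Q :: "real^'n::finite^'n"
  assumes "\<And>c j. S $ c $ j = S $ j $ c" "transpose Q = - Q"
  shows "(\<Sum>c\<in>UNIV. \<Sum>j\<in>UNIV. S $ c $ j * Q $ c $ j) = 0"
proof -
  have Q: "Q $ j $ c = - Q $ c $ j" for c j
    using arg_cong[OF assms(2), of "\<lambda>M. M $ c $ j"] by (simp add: transpose_def)
  have "(\<Sum>c\<in>UNIV. \<Sum>j\<in>UNIV. S $ c $ j * Q $ c $ j) = (\<Sum>j\<in>UNIV. \<Sum>c\<in>UNIV. S $ c $ j * Q $ c $ j)"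
    by (rule sum.swap)
  also have "\<dots> = (\<Sum>j\<in>UNIV. \<Sum>c\<in>UNIV. - (S $ j $ c * Q $ j $ c))"
  proof (intro sum.cong refl)
    fix j c
    show "S $ c $ j * Q $ c $ j = - (S $ j $ c * Q $ j $ c)"
      using Q[of j c] assms(1)[of c j] by simp
  qed
  also have "\<dots> = - (\<Sum>c\<in>UNIV. \<Sum>j\<in>UNIV. S $ c $ j * Q $ c $ j)"
    by (simp add: sum_negf)
  finally show ?thesis by simp
qed

lemma key_alg:
  fixes G F X K W :: "real^'n::finite^'n" and T dX :: "'n \<Rightarrow> real^'n^'n"
  assumes symG: "transpose G = G" and iG: "invertible G" and aF: "transpose F = - F"
    and X: "X = G + (1/4) *\<^sub>R (F ** K ** F)" and iX: "invertible X"
    and K: "K = matrix_inv G" and W: "W = matrix_inv X"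
    and T1: "\<And>j k l. T j $ k $ l = T k $ j $ l" and T2: "\<And>j k l. T j $ k $ l = T j $ l $ k"
    and dX: "\<And>j. dX j = T j - (1/4) *\<^sub>R (F ** K ** T j ** K ** F)"
  shows "(\<Sum>j\<in>UNIV. (W ** dX j ** W) $ i $ j) =
    (\<Sum>j\<in>UNIV. (trace (matrix_inv (G ** X) ** (T j ** X + G ** dX j)) / 2) * W $ i $ j)"
proof -
  define c :: real where "c = 1/4"
  have GK: "G ** K = mat 1" and KG: "K ** G = mat 1" using inv_props[OF iG] K by auto
  have XW: "X ** W = mat 1" and WX: "W ** X = mat 1" using inv_props[OF iX] W by auto
  have GK': "A ** G ** K = A" for A :: "real^'n^'n" by (simp only: matrix_mul_assoc[symmetric] GK matrix_mul_rid)
  have KG': "A ** K ** G = A" for A :: "real^'n^'n" by (simp only: matrix_mul_assoc[symmetric] KG matrix_mul_rid)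
  have XW': "A ** X ** W = A" for A :: "real^'n^'n" by (simp only: matrix_mul_assoc[symmetric] XW matrix_mul_rid)
  have WX': "A ** W ** X = A" for A :: "real^'n^'n" by (simp only: matrix_mul_assoc[symmetric] WX matrix_mul_rid)
  have symK: "transpose K = K" using inv_sym[OF iG symG] K by simp
  have symX: "transpose X = X"
    unfolding X by (simp add: tp_add transpose_scalar matrix_transpose_mul symG symK aF mm_neg_l mm_neg_r
        matrix_mul_assoc)
  have symW: "transpose W = W" using inv_sym[OF iX symX] W by simp
  have X': "X = G + c *\<^sub>R (F ** K ** F)" using X c_def by simp
  have FKX: "F ** K ** X = F + c *\<^sub>R (F ** K ** F ** K ** F)"
    unfolding X' by (simp only: matrix_add_ldistrib mm_scale_r matrix_mul_assoc KG' )
  have XKF: "X ** K ** F = F + c *\<^sub>R (F ** K ** F ** K ** F)"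
    unfolding X' by (simp only: mm_add_r mm_scale_l matrix_mul_assoc GK matrix_mul_lid)
  have comm: "W ** F ** K = K ** F ** W"
  proof -
    have "W ** (F ** K ** X) ** W = W ** (X ** K ** F) ** W" using FKX XKF by simp
    then show ?thesis by (simp only: matrix_mul_assoc XW' WX matrix_mul_lid)
  qed
  have KW: "K = W + c *\<^sub>R (K ** F ** W ** F ** K)"
  proof -
    have "K = K ** (X ** W)" using XW by simp
    also have "\<dots> = W + c *\<^sub>R (K ** F ** K ** F ** W)"
      unfolding X' by (simp only: matrix_add_ldistrib mm_add_r mm_scale_l mm_scale_r matrix_mul_assoc KG matrix_mul_lid)
    also have "K ** F ** K ** F ** W = (K ** F) ** (K ** F ** W)" by (simp only: matrix_mul_assoc)
    also have "\<dots> = (K ** F) ** (W ** F ** K)" by (simp only: comm)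
    also have "\<dots> = K ** F ** W ** F ** K" by (simp only: matrix_mul_assoc)
    finally show ?thesis .
  qed
  have iGX: "matrix_inv (G ** X) = W ** K" using inv_mult[OF iG iX] K W by simp
  have D: "trace (matrix_inv (G ** X) ** (T j ** X + G ** dX j)) / 2 = trace (W ** T j)" for j
  proof -
    have t1: "trace (W ** K ** T j ** X) = trace (K ** T j)"
    proof -
      have "trace (W ** K ** T j ** X) = trace (X ** (W ** K ** T j))" by (rule trace_mul_sym)
      also have "\<dots> = trace (K ** T j)" by (simp only: matrix_mul_assoc XW matrix_mul_lid)
      finally show ?thesis .
    qed
    have t2: "trace (W ** K ** G ** dX j) = trace (W ** dX j)" by (simp only: KG')
    have t3: "trace (W ** dX j) = trace (W ** T j) - c * trace (W ** F ** K ** T j ** K ** F)"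
      unfolding dX c_def[symmetric] by (simp only: mm_diff_l mm_scale_r trace_sub tr_scale matrix_mul_assoc)
    have t4: "trace (W ** F ** K ** T j ** K ** F) = trace (K ** F ** W ** F ** K ** T j)"
    proof -
      have "trace (W ** F ** K ** T j ** K ** F) = trace ((W ** F ** K ** T j) ** (K ** F))"
        by (simp only: matrix_mul_assoc)
      also have "\<dots> = trace ((K ** F) ** (W ** F ** K ** T j))" by (rule trace_mul_sym)
      also have "\<dots> = trace (K ** F ** W ** F ** K ** T j)" by (simp only: matrix_mul_assoc)
      finally show ?thesis .
    qed
    have t5: "trace (K ** T j) = trace (W ** T j) + c * trace (K ** F ** W ** F ** K ** T j)"
    proof -
      have "trace (K ** T j) = trace ((W + c *\<^sub>R (K ** F ** W ** F ** K)) ** T j)" using KW by simp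
      also have "\<dots> = trace (W ** T j) + c * trace (K ** F ** W ** F ** K ** T j)"
        by (simp only: mm_add_r trace_add mm_scale_l tr_scale)
      finally show ?thesis .
    qed
    have "trace (matrix_inv (G ** X) ** (T j ** X + G ** dX j)) =
        trace (W ** K ** T j ** X) + trace (W ** K ** G ** dX j)"
      unfolding iGX by (simp only: matrix_add_ldistrib trace_add matrix_mul_assoc)
    then show ?thesis using t1 t2 t3 t4 t5 by simp
  qed
  define Q where "Q = K ** F ** W"
  have aQ: "transpose Q = - Q"
  proof -
    have "transpose Q = W ** (- F) ** K" unfolding Q_def
      by (simp only: matrix_transpose_mul symW symK aF matrix_mul_assoc)
    also have "\<dots> = - (W ** F ** K)" by (simp only: mm_neg_l mm_neg_r)
    finally show ?thesis unfolding Q_def comm .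
  qed
  define FK where "FK = F ** K"
  have C: "(\<Sum>j\<in>UNIV. (dX j ** W) $ k $ j) = trace (W ** T k)" for k
  proof -
    have e1: "dX j ** W = T j ** W - c *\<^sub>R (FK ** (T j ** Q))" for j
      unfolding dX c_def[symmetric] FK_def Q_def by (simp only: mm_diff_r mm_scale_l matrix_mul_assoc)
    have s1: "(\<Sum>j\<in>UNIV. (T j ** W) $ k $ j) = trace (W ** T k)"
    proof -
      have "(\<Sum>j\<in>UNIV. (T j ** W) $ k $ j) = (\<Sum>j\<in>UNIV. \<Sum>l\<in>UNIV. W $ l $ j * T k $ l $ j)"
        unfolding mult_entry
      proof (intro sum.cong refl)
        fix j l
        show "T j $ k $ l * W $ l $ j = W $ l $ j * T k $ l $ j"
          using T1[of j k l] T2[of k j l] by simp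
      qed
      also have "\<dots> = (\<Sum>l\<in>UNIV. \<Sum>j\<in>UNIV. W $ l $ j * T k $ l $ j)" by (rule sum.swap)
      also have "\<dots> = trace (W ** T k)"
        unfolding trace_def mult_entry
      proof (intro sum.cong refl)
        fix l j
        show "W $ l $ j * T k $ l $ j = W $ l $ j * T k $ j $ l" using T2[of k l j] by simp
      qed
      finally show ?thesis .
    qed
    have s2: "(\<Sum>j\<in>UNIV. (FK ** (T j ** Q)) $ k $ j) = 0"
    proof -
      have "(\<Sum>j\<in>UNIV. (FK ** (T j ** Q)) $ k $ j) =
          (\<Sum>j\<in>UNIV. \<Sum>b\<in>UNIV. FK $ k $ b * (\<Sum>c\<in>UNIV. T b $ c $ j * Q $ c $ j))"
        unfolding mult_entry
      proof (intro sum.cong refl)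
        fix j b
        have "T j $ b $ c = T b $ c $ j" for c using T1[of j b c] T2[of b j c] by simp
        then show "FK $ k $ b * (\<Sum>c\<in>UNIV. T j $ b $ c * Q $ c $ j) =
            FK $ k $ b * (\<Sum>c\<in>UNIV. T b $ c $ j * Q $ c $ j)" by simp
      qed
      also have "\<dots> = (\<Sum>b\<in>UNIV. FK $ k $ b * (\<Sum>c\<in>UNIV. \<Sum>j\<in>UNIV. T b $ c $ j * Q $ c $ j))"
      proof -
        have "(\<Sum>j\<in>UNIV. \<Sum>b\<in>UNIV. FK $ k $ b * (\<Sum>c\<in>UNIV. T b $ c $ j * Q $ c $ j)) =
            (\<Sum>b\<in>UNIV. \<Sum>j\<in>UNIV. FK $ k $ b * (\<Sum>c\<in>UNIV. T b $ c $ j * Q $ c $ j))"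
          by (rule sum.swap)
        also have "\<dots> = (\<Sum>b\<in>UNIV. FK $ k $ b * (\<Sum>j\<in>UNIV. \<Sum>c\<in>UNIV. T b $ c $ j * Q $ c $ j))"
          by (simp only: sum_distrib_left)
        also have "\<dots> = (\<Sum>b\<in>UNIV. FK $ k $ b * (\<Sum>c\<in>UNIV. \<Sum>j\<in>UNIV. T b $ c $ j * Q $ c $ j))"
        proof (intro sum.cong refl)
          fix b
          show "FK $ k $ b * (\<Sum>j\<in>UNIV. \<Sum>c\<in>UNIV. T b $ c $ j * Q $ c $ j) =
              FK $ k $ b * (\<Sum>c\<in>UNIV. \<Sum>j\<in>UNIV. T b $ c $ j * Q $ c $ j)"
            using sum.swap[of "\<lambda>j c. T b $ c $ j * Q $ c $ j" UNIV UNIV] by simp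
        qed
        finally show ?thesis .
      qed
      also have "\<dots> = 0" using sum_sym_antisym[OF T2 aQ] by simp
      finally show ?thesis .
    qed
    have "(\<Sum>j\<in>UNIV. (dX j ** W) $ k $ j) = (\<Sum>j\<in>UNIV. (T j ** W) $ k $ j) - c * (\<Sum>j\<in>UNIV. (FK ** (T j ** Q)) $ k $ j)"
      by (simp add: e1 sum_subtractf sum_distrib_left)
    then show ?thesis using s1 s2 by simp
  qed
  have "(\<Sum>j\<in>UNIV. (W ** dX j ** W) $ i $ j) = (\<Sum>j\<in>UNIV. \<Sum>k\<in>UNIV. W $ i $ k * (dX j ** W) $ k $ j)"
    by (simp only: matrix_mul_assoc[symmetric] mult_entry)
  also have "\<dots> = (\<Sum>k\<in>UNIV. W $ i $ k * (\<Sum>j\<in>UNIV. (dX j ** W) $ k $ j))"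
    by (subst sum.swap) (simp add: sum_distrib_left)
  also have "\<dots> = (\<Sum>k\<in>UNIV. W $ i $ k * trace (W ** T k))" by (simp only: C)
  also have "\<dots> = (\<Sum>j\<in>UNIV. (trace (matrix_inv (G ** X) ** (T j ** X + G ** dX j)) / 2) * W $ i $ j)"
    by (simp only: D mult.commute)
  finally show ?thesis .
qed

definition good :: "(real^'n::finite \<Rightarrow> real) \<Rightarrow> real^'n^'n \<Rightarrow> (real^'n) set \<Rightarrow> bool" where
  "good tau F U \<longleftrightarrow> open U \<and> (\<forall>is. \<forall>z\<in>U. iter_pd is tau differentiable (at z)) \<and>
     (\<forall>z\<in>U. pos_def (hessian tau z)) \<and> transpose F = - F \<and>
     (\<forall>y\<in>U. pos_def (mat 1 + (1/4::real) *\<^sub>R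
             ((matrix_inv (msqrt (hessian tau y)) ** F ** matrix_inv (msqrt (hessian tau y)))
            ** (matrix_inv (msqrt (hessian tau y)) ** F ** matrix_inv (msqrt (hessian tau y))))))"

definition Tf :: "(real^'n::finite \<Rightarrow> real) \<Rightarrow> real^'n \<Rightarrow> 'n \<Rightarrow> real^'n^'n" where
  "Tf tau z j = (\<chi> k l. iter_pd [j,k,l] tau z)"

definition dXf :: "(real^'n::finite \<Rightarrow> real) \<Rightarrow> real^'n^'n \<Rightarrow> real^'n \<Rightarrow> 'n \<Rightarrow> real^'n^'n" where
  "dXf tau F z j = Tf tau z j - (1/4) *\<^sub>R (F ** matrix_inv (hessian tau z) ** Tf tau z j ** matrix_inv (hessian tau z) ** F)"

definition Df :: "(real^'n::finite \<Rightarrow> real) \<Rightarrow> real^'n^'n \<Rightarrow> real^'n \<Rightarrow> 'n \<Rightarrow> real" where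
  "Df tau F z j = trace (matrix_inv (hessian tau z ** Xi (hessian tau z) F) **
      (Tf tau z j ** Xi (hessian tau z) F + hessian tau z ** dXf tau F z j)) / 2"

lemma good_D:
  assumes "good tau F U"
  shows "open U" "\<And>is z. z \<in> U \<Longrightarrow> iter_pd is tau differentiable (at z)"
    "\<And>z. z \<in> U \<Longrightarrow> pos_def (hessian tau z)" "transpose F = - F"
    "\<And>y. y \<in> U \<Longrightarrow> pos_def (mat 1 + (1/4::real) *\<^sub>R
             ((matrix_inv (msqrt (hessian tau y)) ** F ** matrix_inv (msqrt (hessian tau y)))
            ** (matrix_inv (msqrt (hessian tau y)) ** F ** matrix_inv (msqrt (hessian tau y)))))"
  using assms unfolding good_def by auto

lemma hess_entry: "(\<lambda>z. hessian tau z $ k $ l) = iter_pd [k,l] tau"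
  by (simp add: hessian_def fun_eq_iff)

lemma mdiff_G: "good tau F U \<Longrightarrow> z \<in> U \<Longrightarrow> mdiff (hessian tau) z"
  unfolding mdiff_def hess_entry using good_D(2) by blast

lemma dm_G: "dm j (hessian tau) z = Tf tau z j"
  by (simp add: dm_def hess_entry Tf_def)

lemma T_entry: "(\<lambda>z. Tf tau z j $ k $ l) = iter_pd [j,k,l] tau"
  by (simp add: Tf_def fun_eq_iff del: iter_pd.simps)

lemma mdiff_T: "good tau F U \<Longrightarrow> z \<in> U \<Longrightarrow> mdiff (\<lambda>z. Tf tau z j) z"
  unfolding mdiff_def T_entry using good_D(2) by blast

lemma G_props: "good tau F U \<Longrightarrow> z \<in> U \<Longrightarrow> invertible (hessian tau z) \<and> transpose (hessian tau z) = hessian tau z"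
  using good_D(3) pos_def_invertible unfolding pos_def_def by blast

lemma inv_mult_cancel:
  fixes S :: "real^'n::finite^'n"
  assumes "invertible S"
  shows "A ** S ** matrix_inv S = A" "A ** matrix_inv S ** S = A"
  by (simp_all only: matrix_mul_assoc[symmetric] inv_props[OF assms] matrix_mul_rid)

lemma X_props:
  fixes tau :: "real^'n::finite \<Rightarrow> real"
  assumes g: "good tau F U" and z: "z \<in> U"
  shows "invertible (Xi (hessian tau z) F) \<and> det (hessian tau z ** Xi (hessian tau z) F) > 0"
proof -
  define G where "G = hessian tau z"
  define S where "S = msqrt G"
  define Si where "Si = matrix_inv S"
  define M where "M = mat 1 + (1/4::real) *\<^sub>R ((Si ** F ** Si) ** (Si ** F ** Si))"
  have pG: "pos_def G" using good_D(3)[OF g z] G_def by simp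
  have pS: "pos_def S" and SS: "S ** S = G" using msqrt_props[OF pG] S_def by auto
  have iS: "invertible S" using pos_def_invertible[OF pS] .
  have pM: "pos_def M" using good_D(5)[OF g z] unfolding M_def Si_def S_def G_def .
  have K: "matrix_inv G = Si ** Si" using inv_mult[OF iS iS] SS Si_def by simp
  have SiSi: "A ** matrix_inv S ** matrix_inv S = A ** matrix_inv G" for A :: "real^'n^'n"
    by (simp only: K Si_def matrix_mul_assoc)
  have "S ** M ** S = S ** S + (1/4::real) *\<^sub>R (S ** Si ** F ** Si ** Si ** F ** Si ** S)"
    unfolding M_def by (simp only: matrix_add_ldistrib mm_add_r mm_scale_l mm_scale_r matrix_mul_rid matrix_mul_assoc)
  also have "\<dots> = G + (1/4::real) *\<^sub>R (F ** matrix_inv G ** F)"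
    using iS by (simp only: SS inv_props(1) matrix_mul_lid inv_mult_cancel Si_def SiSi)
  also have "\<dots> = Xi G F" by (simp add: Xi_def)
  finally have XSMS: "Xi G F = S ** M ** S" by simp
  have dS: "det S > 0" using pos_def_det[OF pS] .
  have dM: "det M > 0" using pos_def_det[OF pM] .
  have dG: "det G > 0" using pos_def_det[OF pG] .
  have dX: "det (Xi G F) > 0" unfolding XSMS det_mul using dS dM by simp
  then have "invertible (Xi G F)" using invertible_det_nz by fastforce
  moreover have "det (G ** Xi G F) > 0" unfolding det_mul using dG dX by simp
  ultimately show ?thesis unfolding G_def by simp
qed

lemma T_sym1:
  assumes g: "good tau F U" and z: "z \<in> U"
  shows "Tf tau z j $ k $ l = Tf tau z k $ j $ l"
proof -
  have d: "\<And>is z. z \<in> U \<Longrightarrow> iter_pd is tau differentiable (at z)" using good_D(2)[OF g] by blast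
  have "pd j (pd k (pd l tau)) z = pd k (pd j (pd l tau)) z"
  proof (rule schwarz[OF good_D(1)[OF g] z])
    show "\<forall>z\<in>U. pd l tau differentiable at z" using d[of _ "[l]"] by simp
    show "\<forall>z\<in>U. pd k (pd l tau) differentiable at z" using d[of _ "[k,l]"] by simp
    show "\<forall>z\<in>U. pd j (pd l tau) differentiable at z" using d[of _ "[j,l]"] by simp
    show "continuous (at z) (pd j (pd k (pd l tau)))"
      using differentiable_imp_continuous_within[OF d[OF z, of "[j,k,l]"]] by simp
    show "continuous (at z) (pd k (pd j (pd l tau)))"
      using differentiable_imp_continuous_within[OF d[OF z, of "[k,j,l]"]] by simp
  qed
  then show ?thesis by (simp add: Tf_def)
qed

lemma T_sym2:
  assumes g: "good tau F U" and z: "z \<in> U"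
  shows "Tf tau z j $ k $ l = Tf tau z j $ l $ k"
proof -
  have "pd j (iter_pd [k,l] tau) z = pd j (iter_pd [l,k] tau) z"
  proof (rule pd_local[OF good_D(1)[OF g] z])
    fix y assume y: "y \<in> U"
    have "transpose (hessian tau y) = hessian tau y" using G_props[OF g y] by blast
    then have "hessian tau y $ l $ k = hessian tau y $ k $ l"
      by (metis transpose_def vec_lambda_beta)
    then show "iter_pd [k,l] tau y = iter_pd [l,k] tau y" by (simp add: hessian_def)
  qed
  then show ?thesis by (simp add: Tf_def)
qed

lemma mdiff_K: "good tau F U \<Longrightarrow> z \<in> U \<Longrightarrow> mdiff (\<lambda>z. matrix_inv (hessian tau z)) z"
  using mdiff_inv[OF mdiff_G] G_props by blast

lemma dm_K: "good tau F U \<Longrightarrow> z \<in> U \<Longrightarrow> dm j (\<lambda>z. matrix_inv (hessian tau z)) z =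
    - (matrix_inv (hessian tau z) ** Tf tau z j ** matrix_inv (hessian tau z))"
  using dm_inv[OF mdiff_G, of tau F U z j] G_props[of tau F U z] by (simp add: dm_G)

lemma Xi_fun: "(\<lambda>z. Xi (hessian tau z) F) = (\<lambda>z. hessian tau z + (1/4::real) *\<^sub>R (F ** matrix_inv (hessian tau z) ** F))"
  by (simp add: Xi_def)

lemma mdiff_X:
  assumes g: "good tau F U" and z: "z \<in> U"
  shows "mdiff (\<lambda>z. Xi (hessian tau z) F) z"
  unfolding Xi_fun
  by (intro mdiff_add mdiff_scaleR mdiff_mult mdiff_const mdiff_G[OF g z] mdiff_K[OF g z])

lemma dm_X:
  assumes g: "good tau F U" and z: "z \<in> U"
  shows "dm j (\<lambda>z. Xi (hessian tau z) F) z = dXf tau F z j"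
proof -
  have mK: "mdiff (\<lambda>z. matrix_inv (hessian tau z)) z" by (rule mdiff_K[OF g z])
  have mFK: "mdiff (\<lambda>z. F ** matrix_inv (hessian tau z)) z" by (intro mdiff_mult mdiff_const mK)
  have mFKF: "mdiff (\<lambda>z. F ** matrix_inv (hessian tau z) ** F) z" by (intro mdiff_mult mdiff_const mFK)
  have "dm j (\<lambda>z. F ** matrix_inv (hessian tau z) ** F) z =
      - (F ** matrix_inv (hessian tau z) ** Tf tau z j ** matrix_inv (hessian tau z) ** F)"
    unfolding dm_mult[OF mFK mdiff_const] dm_mult[OF mdiff_const mK] dm_const dm_K[OF g z]
    by (simp only: mm_zero_l mmul_zero add_0 add_0_right mm_neg_l mm_neg_r matrix_mul_assoc)
  then show ?thesis
    unfolding Xi_fun dm_add[OF mdiff_G[OF g z] mdiff_scaleR[OF mFKF]] dm_scaleR[OF mFKF] dm_G dXf_def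
    by (simp add: scaleR_minus_right)
qed

lemma mdiff_W: "good tau F U \<Longrightarrow> z \<in> U \<Longrightarrow> mdiff (\<lambda>z. matrix_inv (Xi (hessian tau z) F)) z"
  using mdiff_inv[OF mdiff_X] X_props by blast

lemma dm_W: "good tau F U \<Longrightarrow> z \<in> U \<Longrightarrow> dm j (\<lambda>z. matrix_inv (Xi (hessian tau z) F)) z =
    - (matrix_inv (Xi (hessian tau z) F) ** dXf tau F z j ** matrix_inv (Xi (hessian tau z) F))"
  using dm_inv[OF mdiff_X, of tau F U z j] X_props[of tau F U z] by (simp add: dm_X)

lemma mdiff_P: "good tau F U \<Longrightarrow> z \<in> U \<Longrightarrow> mdiff (\<lambda>z. hessian tau z ** Xi (hessian tau z) F) z"
  by (intro mdiff_mult mdiff_G mdiff_X)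

lemma inv_P: "good tau F U \<Longrightarrow> z \<in> U \<Longrightarrow> invertible (hessian tau z ** Xi (hessian tau z) F)"
  using X_props[of tau F U z] invertible_det_nz by fastforce

lemma pd_L:
  assumes g: "good tau F U" and z: "z \<in> U"
  shows "pd j (\<lambda>z. ln (det (hessian tau z ** Xi (hessian tau z) F) powr (1/2))) z = Df tau F z j"
proof -
  have dP: "det (hessian tau z ** Xi (hessian tau z) F) > 0" using X_props[OF g z] by blast
  have "pd j (\<lambda>z. ln (det (hessian tau z ** Xi (hessian tau z) F) powr (1/2))) z =
      pd j (\<lambda>z. det (hessian tau z ** Xi (hessian tau z) F)) z / (2 * det (hessian tau z ** Xi (hessian tau z) F))"
    by (rule pd_lnpowr[OF mdiff_det[OF mdiff_P[OF g z]] dP])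
  also have "\<dots> = Df tau F z j"
    unfolding pd_det[OF mdiff_P[OF g z] inv_P[OF g z]] Df_def
      dm_mult[OF mdiff_G[OF g z] mdiff_X[OF g z]] dm_G dm_X[OF g z]
    using dP by simp
  finally show ?thesis .
qed

lemma pointwise:
  assumes g: "good tau F U" and z: "z \<in> U"
  shows "(\<Sum>j\<in>UNIV. pd j (\<lambda>y. matrix_inv (Xi (hessian tau y) F) $ i $ j) z) =
    - (\<Sum>j\<in>UNIV. Df tau F z j * matrix_inv (Xi (hessian tau z) F) $ i $ j)"
proof -
  have e: "pd j (\<lambda>y. matrix_inv (Xi (hessian tau y) F) $ i $ j) z =
      - ((matrix_inv (Xi (hessian tau z) F) ** dXf tau F z j ** matrix_inv (Xi (hessian tau z) F)) $ i $ j)" for j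
    using arg_cong[OF dm_W[OF g z, of j], of "\<lambda>M. M $ i $ j"] by (simp add: dm_def)
  have "(\<Sum>j\<in>UNIV. (matrix_inv (Xi (hessian tau z) F) ** dXf tau F z j ** matrix_inv (Xi (hessian tau z) F)) $ i $ j) =
      (\<Sum>j\<in>UNIV. Df tau F z j * matrix_inv (Xi (hessian tau z) F) $ i $ j)"
    unfolding Df_def
  proof (rule key_alg)
    show "transpose (hessian tau z) = hessian tau z" "invertible (hessian tau z)" using G_props[OF g z] by auto
    show "transpose F = - F" using good_D(4)[OF g] .
    show "Xi (hessian tau z) F = hessian tau z + (1/4) *\<^sub>R (F ** matrix_inv (hessian tau z) ** F)"
      by (simp add: Xi_def)
    show "invertible (Xi (hessian tau z) F)" using X_props[OF g z] by blast
    show "\<And>j k l. Tf tau z j $ k $ l = Tf tau z k $ j $ l" using T_sym1[OF g z] .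
    show "\<And>j k l. Tf tau z j $ k $ l = Tf tau z j $ l $ k" using T_sym2[OF g z] .
    show "\<And>j. dXf tau F z j = Tf tau z j - (1/4) *\<^sub>R (F ** matrix_inv (hessian tau z) ** Tf tau z j ** matrix_inv (hessian tau z) ** F)"
      by (simp add: dXf_def)
  qed simp_all
  then show ?thesis unfolding e by (simp add: sum_negf)
qed

lemma mdiff_dX: "good tau F U \<Longrightarrow> z \<in> U \<Longrightarrow> mdiff (\<lambda>z. dXf tau F z j) z"
  unfolding dXf_def
  by (intro mdiff_diff mdiff_scaleR mdiff_mult mdiff_const mdiff_T mdiff_K)

lemma diff_E: "good tau F U \<Longrightarrow> z \<in> U \<Longrightarrow>
  (\<lambda>y. - ((matrix_inv (Xi (hessian tau y) F) ** dXf tau F y j ** matrix_inv (Xi (hessian tau y) F)) $ i $ j))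
    differentiable (at z)"
proof -
  assume g: "good tau F U" and z: "z \<in> U"
  have "mdiff (\<lambda>y. matrix_inv (Xi (hessian tau y) F) ** dXf tau F y j ** matrix_inv (Xi (hessian tau y) F)) z"
    by (intro mdiff_mult mdiff_W[OF g z] mdiff_dX[OF g z])
  then show ?thesis unfolding mdiff_def by (intro differentiable_minus) blast
qed

lemma diff_D: "good tau F U \<Longrightarrow> z \<in> U \<Longrightarrow> (\<lambda>y. Df tau F y j) differentiable (at z)"
proof -
  assume g: "good tau F U" and z: "z \<in> U"
  have m: "mdiff (\<lambda>y. matrix_inv (hessian tau y ** Xi (hessian tau y) F) **
      (Tf tau y j ** Xi (hessian tau y) F + hessian tau y ** dXf tau F y j)) z"
    by (intro mdiff_mult mdiff_inv mdiff_P[OF g z] inv_P[OF g z] mdiff_add mdiff_T[OF g z] mdiff_X[OF g z]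
        mdiff_G[OF g z] mdiff_dX[OF g z])
  have "(\<lambda>y. (\<Sum>a\<in>UNIV. (matrix_inv (hessian tau y ** Xi (hessian tau y) F) **
      (Tf tau y j ** Xi (hessian tau y) F + hessian tau y ** dXf tau F y j)) $ a $ a) / 2) differentiable (at z)"
    using m unfolding mdiff_def by (intro differentiable_divide differentiable_sum differentiable_const) auto
  then show ?thesis unfolding Df_def trace_def .
qed

lemma pdW: "good tau F U \<Longrightarrow> z \<in> U \<Longrightarrow> pd j (\<lambda>y. matrix_inv (Xi (hessian tau y) F) $ i $ j) z =
      - ((matrix_inv (Xi (hessian tau z) F) ** dXf tau F z j ** matrix_inv (Xi (hessian tau z) F)) $ i $ j)"
  using arg_cong[OF dm_W[of tau F U z j], of "\<lambda>M. M $ i $ j"] by (simp add: dm_def)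

theorem proposition6p8:
  fixes S :: "(real^'n::finite) set"
    and tau :: "real^'n \<Rightarrow> real"
    and F :: "real^'n^'n"
    and x :: "real^'n"
  assumes "finite S"
    and "interior (convex hull S) \<noteq> {}"
    and "smooth_on tau (interior (convex hull S))"
    and "strictly_convex_on (interior (convex hull S)) tau"
    and "\<forall>y\<in>interior (convex hull S). pos_def (hessian tau y)"
    and "transpose F = - F"
    and "\<forall>y\<in>interior (convex hull S).
           pos_def (mat 1 + (1/4::real) *\<^sub>R
             ((matrix_inv (msqrt (hessian tau y)) ** F ** matrix_inv (msqrt (hessian tau y)))
            ** (matrix_inv (msqrt (hessian tau y)) ** F ** matrix_inv (msqrt (hessian tau y)))))"
    and "x \<in> interior (convex hull S)"
  shows "- (\<Sum>i\<in>UNIV. \<Sum>j\<in>UNIV.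
             pd i (pd j (\<lambda>y. matrix_inv (Xi (hessian tau y) F) $ i $ j)) x)
       = (\<Sum>i\<in>UNIV. \<Sum>j\<in>UNIV.
             pd i (\<lambda>y. pd j (\<lambda>z. ln (det (hessian tau z ** Xi (hessian tau z) F) powr (1/2))) y
                       * matrix_inv (Xi (hessian tau y) F) $ i $ j) x)"
proof -
  define U where "U = interior (convex hull S)"
  have oU: "open U" unfolding U_def by simp
  have xU: "x \<in> U" using assms(8) U_def by simp
  have g: "good tau F U"
    unfolding good_def
  proof (intro conjI oU allI ballI)
    fix "is" z assume "z \<in> U"
    then show "iter_pd is tau differentiable (at z)"
      using assms(3) oU unfolding smooth_on_def U_def by (simp add: differentiable_on_eq_differentiable_at)
  qed (use assms(5,6,7) U_def in auto)
  define W where "W y = matrix_inv (Xi (hessian tau y) F)" for y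
  define E where "E i j y = - ((W y ** dXf tau F y j ** W y) $ i $ j)" for i j y
  define R where "R i y = (\<Sum>j\<in>UNIV. Df tau F y j * W y $ i $ j)" for i y
  have dE: "E i j differentiable (at x)" for i j
    unfolding E_def W_def using diff_E[OF g xU] .
  have dR: "R i differentiable (at x)" for i
    unfolding R_def W_def using g xU
    by (intro differentiable_sum differentiable_mult diff_D[OF g xU] ballI)
      (auto intro: mdiff_W[OF g xU, unfolded mdiff_def, rule_format])
  have lhs: "(\<Sum>j\<in>UNIV. pd i (pd j (\<lambda>y. W y $ i $ j)) x) = - pd i (R i) x" for i
  proof -
    have "(\<Sum>j\<in>UNIV. pd i (pd j (\<lambda>y. W y $ i $ j)) x) = (\<Sum>j\<in>UNIV. pd i (E i j) x)"
      by (intro sum.cong refl pd_local[OF oU xU]) (simp add: pdW[OF g] E_def W_def)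
    also have "\<dots> = pd i (\<lambda>z. \<Sum>j\<in>UNIV. E i j z) x"
      by (rule pd_sum[symmetric]) (simp_all add: dE)
    also have "\<dots> = pd i (\<lambda>z. - R i z) x"
    proof (rule pd_local[OF oU xU])
      fix z assume z: "z \<in> U"
      have "(\<Sum>j\<in>UNIV. E i j z) = (\<Sum>j\<in>UNIV. pd j (\<lambda>y. W y $ i $ j) z)"
        by (intro sum.cong refl) (simp add: pdW[OF g z] E_def W_def)
      also have "\<dots> = - R i z" unfolding R_def W_def by (rule pointwise[OF g z])
      finally show "(\<Sum>j\<in>UNIV. E i j z) = - R i z" .
    qed
    also have "\<dots> = - pd i (R i) x" by (rule pd_uminus[OF dR])
    finally show ?thesis .
  qed
  have rhs: "(\<Sum>j\<in>UNIV. pd i (\<lambda>y. pd j (\<lambda>z. ln (det (hessian tau z ** Xi (hessian tau z) F) powr (1/2))) y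
                       * W y $ i $ j) x) = pd i (R i) x" for i
  proof -
    have "(\<Sum>j\<in>UNIV. pd i (\<lambda>y. pd j (\<lambda>z. ln (det (hessian tau z ** Xi (hessian tau z) F) powr (1/2))) y
                       * W y $ i $ j) x) = (\<Sum>j\<in>UNIV. pd i (\<lambda>y. Df tau F y j * W y $ i $ j) x)"
      by (intro sum.cong refl pd_local[OF oU xU]) (simp only: pd_L[OF g])
    also have "\<dots> = pd i (R i) x" unfolding R_def
      by (rule pd_sum[symmetric]) (auto intro!: differentiable_mult diff_D[OF g xU]
          mdiff_W[OF g xU, unfolded mdiff_def, rule_format] simp: W_def)
    finally show ?thesis .
  qed
  show ?thesis using lhs rhs unfolding W_def by (simp add: sum_negf)
qed

end
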